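(* Let $Q$ be a commutative A-loop and for $x\in Q$ let $P_x = L_xL_{x^{-1}}^{-1}$, i.e. $yP_x = x^{-1}\backslash(xy)$. Then for all $x,y\in Q$, $P_xP_yP_x = P_{yP_x}$ (maps composed left to right). In particular, $P_Q=\{P_x : x\in Q\}$ is a twisted subgroup of $\mathrm{Mlt}(Q)$.
   Context: A loop is a set with a binary operation and neutral element $1$ in which all left translations $L_x:y\mapsto xy$ and right translations $y\mapsto yx$ are bijections; $\mathrm{Mlt}(Q)$ is the group they generate and $\mathrm{Inn}(Q)$ the stabilizer of $1$ in it. A commutative A-loop is a commutative loop all of whose inner mappings are automorphisms. Maps act on the right: $yL_x=xy$, and $y(\alpha\beta)=(y\alpha)\beta$. $x\backslash y$ is the unique $z$ with $xz=y$; $x^{-1}=x\backslash 1$. A twisted subgroup of a group $G$ is a subset $T\subseteq G$ with $1\in T$, $a^{-1}\in T$ for $a\in T$, and $aba\in T$ for $a,b\in T$. *)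

theory Defs
  imports "HOL-Algebra.Bij" "HOL-Algebra.Generated_Groups"
begin

text \<open>Maps on Q are represented as extensional functions (undefined outside Q), i.e.
  elements of Bij Q; the group BijGroup Q multiplies by composition.\<close>

definition loop :: "'a set \<Rightarrow> ('a \<Rightarrow> 'a \<Rightarrow> 'a) \<Rightarrow> 'a \<Rightarrow> bool" where
  "loop Q m e \<longleftrightarrow> e \<in> Q \<and> (\<forall>x\<in>Q. \<forall>y\<in>Q. m x y \<in> Q)
     \<and> (\<forall>x\<in>Q. m e x = x \<and> m x e = x)
     \<and> (\<forall>x\<in>Q. bij_betw (\<lambda>y. m x y) Q Q)
     \<and> (\<forall>x\<in>Q. bij_betw (\<lambda>y. m y x) Q Q)"

definition lmap :: "'a set \<Rightarrow> ('a \<Rightarrow> 'a \<Rightarrow> 'a) \<Rightarrow> 'a \<Rightarrow> ('a \<Rightarrow> 'a)" where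
  "lmap Q m x = (\<lambda>y\<in>Q. m x y)"

definition rmap :: "'a set \<Rightarrow> ('a \<Rightarrow> 'a \<Rightarrow> 'a) \<Rightarrow> 'a \<Rightarrow> ('a \<Rightarrow> 'a)" where
  "rmap Q m x = (\<lambda>y\<in>Q. m y x)"

definition Mlt :: "'a set \<Rightarrow> ('a \<Rightarrow> 'a \<Rightarrow> 'a) \<Rightarrow> ('a \<Rightarrow> 'a) set" where
  "Mlt Q m = generate (BijGroup Q) (lmap Q m ` Q \<union> rmap Q m ` Q)"

definition Inn :: "'a set \<Rightarrow> ('a \<Rightarrow> 'a \<Rightarrow> 'a) \<Rightarrow> 'a \<Rightarrow> ('a \<Rightarrow> 'a) set" where
  "Inn Q m e = {f \<in> Mlt Q m. f e = e}"

definition loop_aut :: "'a set \<Rightarrow> ('a \<Rightarrow> 'a \<Rightarrow> 'a) \<Rightarrow> ('a \<Rightarrow> 'a) \<Rightarrow> bool" where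
  "loop_aut Q m f \<longleftrightarrow> bij_betw f Q Q \<and> (\<forall>x\<in>Q. \<forall>y\<in>Q. f (m x y) = m (f x) (f y))"

definition comm_A_loop :: "'a set \<Rightarrow> ('a \<Rightarrow> 'a \<Rightarrow> 'a) \<Rightarrow> 'a \<Rightarrow> bool" where
  "comm_A_loop Q m e \<longleftrightarrow> loop Q m e \<and> (\<forall>x\<in>Q. \<forall>y\<in>Q. m x y = m y x)
     \<and> (\<forall>f\<in>Inn Q m e. loop_aut Q m f)"

definition ldiv :: "'a set \<Rightarrow> ('a \<Rightarrow> 'a \<Rightarrow> 'a) \<Rightarrow> 'a \<Rightarrow> 'a \<Rightarrow> 'a" where
  "ldiv Q m x y = (THE z. z \<in> Q \<and> m x z = y)"

definition linv :: "'a set \<Rightarrow> ('a \<Rightarrow> 'a \<Rightarrow> 'a) \<Rightarrow> 'a \<Rightarrow> 'a \<Rightarrow> 'a" where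
  "linv Q m e x = ldiv Q m x e"

definition Pmap :: "'a set \<Rightarrow> ('a \<Rightarrow> 'a \<Rightarrow> 'a) \<Rightarrow> 'a \<Rightarrow> 'a \<Rightarrow> ('a \<Rightarrow> 'a)" where
  "Pmap Q m e x = (\<lambda>y\<in>Q. ldiv Q m (linv Q m e x) (m x y))"

definition twisted_subgroup :: "('g, 'b) monoid_scheme \<Rightarrow> 'g set \<Rightarrow> bool" where
  "twisted_subgroup G T \<longleftrightarrow> T \<subseteq> carrier G \<and> \<one>\<^bsub>G\<^esub> \<in> T
     \<and> (\<forall>a\<in>T. inv\<^bsub>G\<^esub> a \<in> T)
     \<and> (\<forall>a\<in>T. \<forall>b\<in>T. a \<otimes>\<^bsub>G\<^esub> b \<otimes>\<^bsub>G\<^esub> a \<in> T)"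

end

theory Submission
  imports Defs
begin


locale cal =
  fixes Q :: "'a set" and m :: "'a \<Rightarrow> 'a \<Rightarrow> 'a" and e :: 'a
  assumes CA: "comm_A_loop Q m e"
begin

lemma L: "loop Q m e" using CA by (simp add: comm_A_loop_def)
lemma eQ[simp]: "e \<in> Q" using L by (simp add: loop_def)
lemma mQ[simp]: "x \<in> Q \<Longrightarrow> y \<in> Q \<Longrightarrow> m x y \<in> Q" using L by (simp add: loop_def)
lemma lid[simp]: "x \<in> Q \<Longrightarrow> m e x = x" using L by (simp add: loop_def)
lemma rid[simp]: "x \<in> Q \<Longrightarrow> m x e = x" using L by (simp add: loop_def)
lemma comm: "x \<in> Q \<Longrightarrow> y \<in> Q \<Longrightarrow> m x y = m y x" using CA by (simp add: comm_A_loop_def)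
lemma bijL: "x \<in> Q \<Longrightarrow> bij_betw (\<lambda>y. m x y) Q Q" using L by (simp add: loop_def)

lemma cancel: "x \<in> Q \<Longrightarrow> a \<in> Q \<Longrightarrow> b \<in> Q \<Longrightarrow> m x a = m x b \<Longrightarrow> a = b"
  using bijL[of x] by (auto simp: bij_betw_def inj_on_def)

lemma ex1: "x \<in> Q \<Longrightarrow> y \<in> Q \<Longrightarrow> \<exists>!z. z \<in> Q \<and> m x z = y"
proof -
  assume x: "x \<in> Q" and y: "y \<in> Q"
  have "y \<in> (\<lambda>y. m x y) ` Q" using bijL[OF x] y by (simp add: bij_betw_def)
  then obtain z where "z \<in> Q" "m x z = y" by blast
  then show ?thesis using cancel[OF x] by blast
qed

abbreviation ld where "ld \<equiv> ldiv Q m"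
abbreviation i where "i x \<equiv> ldiv Q m x e"

lemma ldQ[simp]: "x \<in> Q \<Longrightarrow> y \<in> Q \<Longrightarrow> ld x y \<in> Q"
  unfolding ldiv_def using theI'[OF ex1] by blast
lemma ld1[simp]: "x \<in> Q \<Longrightarrow> y \<in> Q \<Longrightarrow> m x (ld x y) = y"
  unfolding ldiv_def using theI'[OF ex1] by blast
lemma ld2[simp]: "x \<in> Q \<Longrightarrow> y \<in> Q \<Longrightarrow> ld x (m x y) = y"
  by (metis cancel ld1 ldQ mQ)

definition inM where "inM f \<longleftrightarrow> (\<exists>g\<in>Mlt Q m. \<forall>w\<in>Q. g w = f w)"

lemma gens: "lmap Q m ` Q \<union> rmap Q m ` Q \<subseteq> carrier (BijGroup Q)"
proof -
  have "lmap Q m x \<in> Bij Q" if "x \<in> Q" for x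
    using bijL[OF that] unfolding Bij_def lmap_def
    by (auto simp: bij_betw_def inj_on_def)
  moreover have "rmap Q m x \<in> Bij Q" if "x \<in> Q" for x
  proof -
    have "rmap Q m x = lmap Q m x" unfolding rmap_def lmap_def using comm that by auto
    thus ?thesis using \<open>x \<in> Q \<Longrightarrow> lmap Q m x \<in> Bij Q\<close> that by simp
  qed
  ultimately show ?thesis by (auto simp: BijGroup_def)
qed

lemma MltB: "g \<in> Mlt Q m \<Longrightarrow> g \<in> Bij Q"
  using group.generate_incl[OF group_BijGroup gens] unfolding Mlt_def
  by (auto simp: BijGroup_def)

lemma inM_L: "x \<in> Q \<Longrightarrow> inM (m x)"
  unfolding inM_def Mlt_def
  by (rule bexI[of _ "lmap Q m x"]) (auto simp: lmap_def intro: generate.incl)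

lemma inM_Linv: "x \<in> Q \<Longrightarrow> inM (ld x)"
proof -
  assume x: "x \<in> Q"
  have lB: "lmap Q m x \<in> Bij Q" using gens x by (auto simp: BijGroup_def)
  have "inv\<^bsub>BijGroup Q\<^esub> (lmap Q m x) \<in> Mlt Q m"
    unfolding Mlt_def using x by (auto intro: generate.inv)
  moreover have "\<forall>w\<in>Q. (inv\<^bsub>BijGroup Q\<^esub> (lmap Q m x)) w = ld x w"
  proof
    fix w assume w: "w \<in> Q"
    have inj: "inj_on (lmap Q m x) Q" using lB by (simp add: Bij_def bij_betw_def)
    have "inv_into Q (lmap Q m x) (lmap Q m x (ld x w)) = ld x w"
      using inv_into_f_f[OF inj] x w by simp
    moreover have "lmap Q m x (ld x w) = w" using x w by (simp add: lmap_def)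
    ultimately show "(inv\<^bsub>BijGroup Q\<^esub> (lmap Q m x)) w = ld x w"
      using inv_BijGroup[OF lB] w by simp
  qed
  ultimately show ?thesis unfolding inM_def by blast
qed

lemma inM_comp: "inM f \<Longrightarrow> inM g \<Longrightarrow> (\<And>w. w \<in> Q \<Longrightarrow> g w \<in> Q) \<Longrightarrow> inM (\<lambda>w. f (g w))"
proof -
  assume "inM f" "inM g" and gQ: "\<And>w. w \<in> Q \<Longrightarrow> g w \<in> Q"
  then obtain f' g' where f': "f' \<in> Mlt Q m" "\<forall>w\<in>Q. f' w = f w"
    and g': "g' \<in> Mlt Q m" "\<forall>w\<in>Q. g' w = g w" unfolding inM_def by blast
  have "f' \<otimes>\<^bsub>BijGroup Q\<^esub> g' \<in> Mlt Q m" using f' g' unfolding Mlt_def by (auto intro: generate.eng)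
  moreover have "\<forall>w\<in>Q. (f' \<otimes>\<^bsub>BijGroup Q\<^esub> g') w = f (g w)"
    using f' g' MltB[OF f'(1)] MltB[OF g'(1)] gQ by (auto simp: BijGroup_def compose_def)
  ultimately show ?thesis unfolding inM_def by blast
qed

lemma inner_hom: "inM f \<Longrightarrow> f e = e \<Longrightarrow> a \<in> Q \<Longrightarrow> b \<in> Q \<Longrightarrow> f (m a b) = m (f a) (f b)"
proof -
  assume "inM f" "f e = e" "a \<in> Q" "b \<in> Q"
  then obtain g where g: "g \<in> Mlt Q m" "\<forall>w\<in>Q. g w = f w" unfolding inM_def by blast
  hence "g \<in> Inn Q m e" using \<open>f e = e\<close> by (simp add: Inn_def)
  hence "loop_aut Q m g" using CA by (simp add: comm_A_loop_def)
  thus ?thesis using g \<open>a \<in> Q\<close> \<open>b \<in> Q\<close> by (simp add: loop_aut_def)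
qed

end

context cal begin

lemma iQ[simp]: "x \<in> Q \<Longrightarrow> i x \<in> Q" by simp
lemma inv_r[simp]: "x \<in> Q \<Longrightarrow> m x (i x) = e" by simp
lemma inv_l[simp]: "x \<in> Q \<Longrightarrow> m (i x) x = e" by (metis comm inv_r iQ)
lemma ldu: "x \<in> Q \<Longrightarrow> z \<in> Q \<Longrightarrow> m x z = y \<Longrightarrow> ld x y = z" by (metis ld2)
lemma ii[simp]: "x \<in> Q \<Longrightarrow> i (i x) = x" by (metis ldu inv_l iQ)

lemma inv_pres: assumes "inM f" "f e = e" "\<And>w. w \<in> Q \<Longrightarrow> f w \<in> Q" "y \<in> Q"
  shows "f (i y) = i (f y)"
proof -
  have "m (f y) (f (i y)) = e" using inner_hom[OF assms(1,2), of y "i y"] assms by simp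
  thus ?thesis using assms by (metis ldu iQ)
qed

lemma inM_psi: "x \<in> Q \<Longrightarrow> inM (\<lambda>w. m x (m (i x) w))"
  by (rule inM_comp[OF inM_L inM_L]) auto

lemma psi_hom: "x \<in> Q \<Longrightarrow> u \<in> Q \<Longrightarrow> v \<in> Q \<Longrightarrow>
   m x (m (i x) (m u v)) = m (m x (m (i x) u)) (m x (m (i x) v))"
  using inner_hom[OF inM_psi, of x u v] by simp

lemma c17: "x \<in> Q \<Longrightarrow> w \<in> Q \<Longrightarrow> m x (m (i x) w) = m (i x) (m x w)"
proof -
  assume x: "x \<in> Q" and w: "w \<in> Q"
  have "m x (m (i x) (m x w)) = m (m x (m (i x) x)) (m x (m (i x) w))" using psi_hom x w by simp
  also have "\<dots> = m x (m x (m (i x) w))" using x by simp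
  finally show ?thesis using x w by (metis cancel mQ iQ)
qed

lemma psi_inv: "x \<in> Q \<Longrightarrow> y \<in> Q \<Longrightarrow> m x (m (i x) (i y)) = i (m x (m (i x) y))"
  using inv_pres[OF inM_psi, of x y] by simp

definition T where "T x y w = ld (m x y) (m y (m x w))"
lemma inM_T: "x \<in> Q \<Longrightarrow> y \<in> Q \<Longrightarrow> inM (T x y)"
  unfolding T_def by (rule inM_comp[OF inM_Linv inM_comp[OF inM_L inM_L]]) auto
lemma TQ[simp]: "x \<in> Q \<Longrightarrow> y \<in> Q \<Longrightarrow> w \<in> Q \<Longrightarrow> T x y w \<in> Q" by (simp add: T_def)
lemma Te: "x \<in> Q \<Longrightarrow> y \<in> Q \<Longrightarrow> T x y e = e"
  proof -
  assume x: "x \<in> Q" and y: "y \<in> Q"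
  have "m y (m x e) = m (m x y) e" using x y comm[of y x] by simp
  thus ?thesis unfolding T_def using x y by (simp, intro ldu) simp_all
qed
lemma T_hom: "x \<in> Q \<Longrightarrow> y \<in> Q \<Longrightarrow> u \<in> Q \<Longrightarrow> v \<in> Q \<Longrightarrow> T x y (m u v) = m (T x y u) (T x y v)"
  using inner_hom[OF inM_T Te] by blast

lemma c23: "x \<in> Q \<Longrightarrow> y \<in> Q \<Longrightarrow> m x (m (i x) (ld x y)) = m (i x) y" by (simp add: c17)
lemma c27: "x \<in> Q \<Longrightarrow> y \<in> Q \<Longrightarrow> m (i x) (ld x y) = ld x (m (i x) y)" by (rule ldu[symmetric]) (simp_all add: c23)
lemma c28: "x \<in> Q \<Longrightarrow> y \<in> Q \<Longrightarrow> m (i x) (m y x) = m x (m (i x) y)" using c17[of x y] comm[of y x] by simp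
lemma c29: "x \<in> Q \<Longrightarrow> y \<in> Q \<Longrightarrow> ld x (m y x) = y" using comm[of y x] by simp
lemma c32: "x \<in> Q \<Longrightarrow> y \<in> Q \<Longrightarrow> m (ld x y) (m x (i (ld x y))) = m y (i (ld x y))"
  using c28[of "ld x y" x] comm[of "i (ld x y)" x] comm[of "i (ld x y)" y] by simp
lemma c33: "x \<in> Q \<Longrightarrow> y \<in> Q \<Longrightarrow> ld (ld x y) y = x" by (rule ldu) (simp_all add: comm)
lemma c34: "x \<in> Q \<Longrightarrow> ld x x = e" by (rule ldu) simp_all
lemma c39: "x \<in> Q \<Longrightarrow> y \<in> Q \<Longrightarrow> m x (ld (i x) y) = ld (i x) (m x y)" using c27[of "i x" y] by simp
lemma c41: "x \<in> Q \<Longrightarrow> y \<in> Q \<Longrightarrow> ld (i x) (m x (m (i x) y)) = m x y" using c17[of x y] by simp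
lemma c42: "x \<in> Q \<Longrightarrow> y \<in> Q \<Longrightarrow> m (i x) (i (ld x y)) = ld x (i (m (i x) y))"
proof -
  assume x: "x \<in> Q" and y: "y \<in> Q"
  have "m x (m (i x) (i (ld x y))) = i (m (i x) y)" using psi_inv[of x "ld x y"] c23 x y by simp
  thus ?thesis using x y by (intro ldu[symmetric]) simp_all
qed
lemma c44: "x \<in> Q \<Longrightarrow> y \<in> Q \<Longrightarrow> ld (i x) (m x (m y (i x))) = m x y" using c41[of x y] comm[of y "i x"] by simp
lemma c45: "x \<in> Q \<Longrightarrow> y \<in> Q \<Longrightarrow> m x (m (i y) (i x)) = i (m x (m (i x) y))" using psi_inv[of x y] comm[of "i y" "i x"] by simp
lemma c46: "x \<in> Q \<Longrightarrow> y \<in> Q \<Longrightarrow> m x (i (ld (i x) y)) = ld (i x) (i (m x y))" using c42[of "i x" y] by simp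
lemma c50: "x \<in> Q \<Longrightarrow> y \<in> Q \<Longrightarrow> ld (i x) (i (m x (m y (i x)))) = m x (i y)"
  using c46[of x "m y (i x)"] c29[of "i x" y] by simp
lemma c49: "x \<in> Q \<Longrightarrow> y \<in> Q \<Longrightarrow> m (i (m x y)) (m x (m y (i x))) = i (m (m x y) (m x (i (m x y))))"
proof -
  assume x: "x \<in> Q" and y: "y \<in> Q"
  have h: "m (m x y) (m (i x) (i (m x y))) = m (m x (m y (i x))) (i (m x y))"
    using c32[of "i x" "m x (m y (i x))"] c44 x y by simp
  have "i (m (m x y) (m x (i (m x y)))) = i (m (m x y) (m (i (m x y)) x))"
    using x y comm[of x "i (m x y)"] by simp
  also have "\<dots> = m (m x y) (m (i x) (i (m x y)))" using c45[of "m x y" x] x y by simp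
  also have "\<dots> = m (i (m x y)) (m x (m y (i x)))" using h x y comm[of "m x (m y (i x))" "i (m x y)"] by simp
  finally show ?thesis by simp
qed

lemma c48: assumes "a \<in> Q" "b \<in> Q" "u \<in> Q" "v \<in> Q"
  shows "ld (m (i (T a b u)) (T a b v)) (m (i (T a b u)) (T a b (m u v))) = T a b u"
proof -
  have "m (i (T a b u)) (T a b (m u v)) = m (T a b u) (m (i (T a b u)) (T a b v))"
    using T_hom[OF assms] c17[of "T a b u" "T a b v"] assms by simp
  thus ?thesis using assms comm[of "T a b u" "m (i (T a b u)) (T a b v)"] by (intro ldu) simp_all
qed

lemma c52: assumes x: "x \<in> Q" and y: "y \<in> Q"
  shows "i (m x (i (m x y))) = m x (m (i x) y)"
proof -
  define c where "c = m x y"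
  define d where "d = i c"
  define a where "a = m x d"
  have cQ: "c \<in> Q" and dQ: "d \<in> Q" and aQ: "a \<in> Q" using x y by (simp_all add: c_def d_def a_def)
  have Tu: "T x d y = i a" unfolding T_def a_def[symmetric]
    using x y dQ by (simp add: d_def c_def comm[of y x])
  have Tv: "T x d (i x) = ld a d" unfolding T_def a_def[symmetric] using x dQ by simp
  have Tuv: "T x d (m y (i x)) = ld a (i (m c a))"
    unfolding T_def a_def[symmetric] using c49[OF x y] x y by (simp add: d_def c_def a_def)
  have "ld (m a (ld a d)) (m a (ld a (i (m c a)))) = i a"
    using c48[OF x dQ y iQ[OF x]] Tu Tv Tuv aQ by simp
  hence "ld d (i (m c a)) = i a" using aQ dQ cQ by simp
  moreover have "ld d (i (m c a)) = m c (i (ld d a))" using c46[of c a] cQ aQ by (simp add: d_def)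
  moreover have "ld d a = x" unfolding a_def using c29[of d x] x dQ by simp
  ultimately have "i a = m c (i x)" by simp
  hence "i (m x (i (m x y))) = m (i x) (m y x)"
    using x y comm[of c "i x"] comm[of x y] by (simp add: a_def d_def c_def)
  thus ?thesis using c28[of x y] x y by simp
qed

lemma c54: "x \<in> Q \<Longrightarrow> y \<in> Q \<Longrightarrow> i (m x (i y)) = m (i x) y"
  using c52[of x "ld x y"] c23[of x y] by simp

lemma AIP: "x \<in> Q \<Longrightarrow> y \<in> Q \<Longrightarrow> i (m x y) = m (i x) (i y)"
  using c54[of x "i y"] by simp

end

context cal begin

lemma F4: "a \<in> Q \<Longrightarrow> b \<in> Q \<Longrightarrow> i (ld a b) = ld (i a) (i b)"
proof -
  assume a: "a \<in> Q" and b: "b \<in> Q"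
  have "m (i a) (i (ld a b)) = i b" using AIP[of a "ld a b"] a b by simp
  thus ?thesis using a b by (intro ldu[symmetric]) simp_all
qed

definition P where "P x w = ld (i x) (m x w)"
lemma PQ[simp]: "x \<in> Q \<Longrightarrow> w \<in> Q \<Longrightarrow> P x w \<in> Q" by (simp add: P_def)

lemma JPJ: "x \<in> Q \<Longrightarrow> v \<in> Q \<Longrightarrow> i (P x v) = ld x (m (i x) (i v))"
  unfolding P_def using F4[of "i x" "m x v"] AIP[of x v] by simp

lemma Pmap_eq: "Pmap Q m e x = restrict (P x) Q"
  unfolding Pmap_def linv_def P_def[abs_def] by simp

lemma main_pt: assumes x: "x \<in> Q" and y: "y \<in> Q" and w: "w \<in> Q"
  shows "P x (P y (P x w)) = P (P x y) w"
proof -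
  define z where "z = P x y"
  have zQ: "z \<in> Q" using x y by (simp add: z_def)
  define iota where "iota t = ld z (P x (m y t))" for t
  have iM: "inM iota" unfolding iota_def P_def
    by (rule inM_comp[OF inM_Linv inM_comp[OF inM_Linv inM_comp[OF inM_L inM_L]]]) (use x y zQ in auto)
  have iQ': "\<And>t. t \<in> Q \<Longrightarrow> iota t \<in> Q" using x y zQ by (simp add: iota_def)
  have ie: "iota e = e" unfolding iota_def using x y zQ by (simp add: z_def c34)
  have one: "\<And>t. t \<in> Q \<Longrightarrow> P x (m y t) = m z (iota t)" using x y zQ by (simp add: iota_def)
  define v where "v = P x w"
  define u where "u = ld (i y) v"
  have vQ: "v \<in> Q" and uQ: "u \<in> Q" using x y w by (simp_all add: v_def u_def)
  have Py: "P y v = m y u" unfolding P_def u_def using c39[of y v] y vQ by simp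
  have "m (i z) (iota u) = m (i z) (i (iota (i u)))"
    using inv_pres[OF iM ie iQ', of "i u"] uQ iQ' by simp
  also have "\<dots> = i (m z (iota (i u)))" using AIP zQ uQ iQ' by simp
  also have "\<dots> = i (P x (m y (i u)))" using one[of "i u"] uQ by simp
  also have "\<dots> = ld x (m (i x) (m (i y) u))" using JPJ[of x "m y (i u)"] AIP[of y "i u"] x y uQ by simp
  also have "\<dots> = w" using x y w vQ by (simp add: u_def v_def P_def)
  finally have "iota u = ld (i z) w" using zQ uQ iQ' w by (intro ldu[symmetric]) simp_all
  hence "P x (P y (P x w)) = m z (ld (i z) w)" using one[of u] uQ Py by (simp add: v_def)
  also have "\<dots> = P z w" unfolding P_def using c39[of z w] zQ w by simp
  finally show ?thesis by (simp add: z_def)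
qed

lemma inM_restrict: "inM f \<Longrightarrow> restrict f Q \<in> Mlt Q m"
proof -
  assume "inM f"
  then obtain g where g: "g \<in> Mlt Q m" "\<forall>w\<in>Q. g w = f w" unfolding inM_def by blast
  have "g \<in> extensional Q" using MltB[OF g(1)] by (simp add: Bij_def)
  hence "g = restrict f Q" using g(2) by (auto simp: extensional_def)
  thus ?thesis using g(1) by simp
qed

lemma Pmap_Mlt: "x \<in> Q \<Longrightarrow> Pmap Q m e x \<in> Mlt Q m"
  unfolding Pmap_eq P_def
  by (rule inM_restrict, rule inM_comp[OF inM_Linv inM_L]) auto

lemma Pmap_Bij: "x \<in> Q \<Longrightarrow> Pmap Q m e x \<in> Bij Q" using MltB Pmap_Mlt by blast

lemma part1: assumes x: "x \<in> Q" and y: "y \<in> Q" shows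
   "Pmap Q m e x \<otimes>\<^bsub>BijGroup Q\<^esub> Pmap Q m e y \<otimes>\<^bsub>BijGroup Q\<^esub> Pmap Q m e x
     = Pmap Q m e (Pmap Q m e x y)"
proof -
  let ?X = "Pmap Q m e x" and ?Y = "Pmap Q m e y"
  have BX: "?X \<in> Bij Q" and BY: "?Y \<in> Bij Q" using Pmap_Bij x y by auto
  have m1: "?X \<otimes>\<^bsub>BijGroup Q\<^esub> ?Y = compose Q ?X ?Y" using BX BY by (simp add: BijGroup_def)
  have BC: "compose Q ?X ?Y \<in> Bij Q" using compose_Bij[OF BX BY] .
  have m2: "compose Q ?X ?Y \<otimes>\<^bsub>BijGroup Q\<^esub> ?X = compose Q (compose Q ?X ?Y) ?X"
    using BC BX by (simp add: BijGroup_def)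
  have pxy: "Pmap Q m e x y = P x y" using y by (simp add: Pmap_eq)
  show ?thesis unfolding m1 m2 pxy
  proof (rule ext)
    fix w show "compose Q (compose Q ?X ?Y) ?X w = Pmap Q m e (P x y) w"
    proof (cases "w \<in> Q")
      case True thus ?thesis using x y main_pt[OF x y True] by (simp add: compose_def Pmap_eq)
    next
      case False thus ?thesis by (simp add: compose_def Pmap_eq)
    qed
  qed
qed

end

context cal begin

lemma ie: "i e = e" by (rule ldu) simp_all

lemma one_P: "\<one>\<^bsub>BijGroup Q\<^esub> = Pmap Q m e e"
proof -
  have "\<And>w. w \<in> Q \<Longrightarrow> P e w = w" unfolding P_def ie by (simp, intro ldu) simp_all
  thus ?thesis by (auto simp: BijGroup_def Pmap_eq intro!: restrict_ext)
qed

lemma sub: "subgroup (Mlt Q m) (BijGroup Q)"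
  unfolding Mlt_def by (rule group.generate_is_subgroup[OF group_BijGroup gens])

lemma inv_P: assumes x: "x \<in> Q" shows "inv\<^bsub>BijGroup Q\<^esub> (Pmap Q m e x) = Pmap Q m e (i x)"
proof (rule group.inv_equality[OF group_BijGroup])
  show "Pmap Q m e x \<in> carrier (BijGroup Q)" "Pmap Q m e (i x) \<in> carrier (BijGroup Q)"
    using Pmap_Bij x by (auto simp: BijGroup_def)
  have "compose Q (Pmap Q m e (i x)) (Pmap Q m e x) = (\<lambda>w\<in>Q. w)"
  proof (rule ext)
    fix w show "compose Q (Pmap Q m e (i x)) (Pmap Q m e x) w = (\<lambda>w\<in>Q. w) w"
      using x by (cases "w \<in> Q") (simp_all add: compose_def Pmap_eq P_def)
  qed
  thus "Pmap Q m e (i x) \<otimes>\<^bsub>BijGroup Q\<^esub> Pmap Q m e x = \<one>\<^bsub>BijGroup Q\<^esub>"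
    using Pmap_Bij x by (simp add: BijGroup_def)
qed

lemma twisted: "twisted_subgroup (BijGroup Q \<lparr>carrier := Mlt Q m\<rparr>) (Pmap Q m e ` Q)"
  unfolding twisted_subgroup_def
proof (intro conjI ballI)
  show "Pmap Q m e ` Q \<subseteq> carrier (BijGroup Q\<lparr>carrier := Mlt Q m\<rparr>)" using Pmap_Mlt by auto
  show "\<one>\<^bsub>BijGroup Q\<lparr>carrier := Mlt Q m\<rparr>\<^esub> \<in> Pmap Q m e ` Q" using one_P by simp
next
  fix a assume "a \<in> Pmap Q m e ` Q"
  then obtain x where x: "x \<in> Q" and a: "a = Pmap Q m e x" by blast
  have "inv\<^bsub>BijGroup Q\<lparr>carrier := Mlt Q m\<rparr>\<^esub> a = inv\<^bsub>BijGroup Q\<^esub> a"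
    using group.m_inv_consistent[OF group_BijGroup sub] Pmap_Mlt x a by simp
  thus "inv\<^bsub>BijGroup Q\<lparr>carrier := Mlt Q m\<rparr>\<^esub> a \<in> Pmap Q m e ` Q" using inv_P x a by simp
next
  fix a b assume "a \<in> Pmap Q m e ` Q" "b \<in> Pmap Q m e ` Q"
  then obtain x y where x: "x \<in> Q" and a: "a = Pmap Q m e x" and y: "y \<in> Q" and b: "b = Pmap Q m e y" by blast
  show "a \<otimes>\<^bsub>BijGroup Q\<lparr>carrier := Mlt Q m\<rparr>\<^esub> b \<otimes>\<^bsub>BijGroup Q\<lparr>carrier := Mlt Q m\<rparr>\<^esub> a \<in> Pmap Q m e ` Q"
    using part1[OF x y] x y a b by (simp add: Pmap_eq)
qed

end

theorem lemma3p3: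
  fixes Q :: "'a set" and m :: "'a \<Rightarrow> 'a \<Rightarrow> 'a" and e :: 'a
  assumes "comm_A_loop Q m e"
  shows "(\<forall>x\<in>Q. \<forall>y\<in>Q.
            Pmap Q m e x \<otimes>\<^bsub>BijGroup Q\<^esub> Pmap Q m e y \<otimes>\<^bsub>BijGroup Q\<^esub> Pmap Q m e x
              = Pmap Q m e (Pmap Q m e x y))
         \<and> twisted_subgroup (BijGroup Q \<lparr>carrier := Mlt Q m\<rparr>) (Pmap Q m e ` Q)"
proof -
  interpret cal Q m e using assms by unfold_locales
  show ?thesis using part1 twisted by blast
qed

end
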